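(* Let $\{(\mathbf{x}_i,\mathbf{v}_i)\}_{i=1}^N$ be a global smooth solution of the Cucker–Smale model with bonding force $$\dot{\mathbf{x}}_i=\mathbf{v}_i,\qquad \dot{\mathbf{v}}_i=\frac{\kappa_0}{N}\sum_{j=1}^N\psi(\|\mathbf{x}_j-\mathbf{x}_i\|)(\mathbf{v}_j-\mathbf{v}_i)+\frac{\kappa_1}{N}\sum_{j\ne i}\Big\langle\mathbf{v}_j-\mathbf{v}_i,\frac{\mathbf{x}_j-\mathbf{x}_i}{\|\mathbf{x}_j-\mathbf{x}_i\|}\Big\rangle\frac{\mathbf{x}_j-\mathbf{x}_i}{\|\mathbf{x}_j-\mathbf{x}_i\|}+\frac{\kappa_2}{N}\sum_{j\ne i}\big(\|\mathbf{x}_j-\mathbf{x}_i\|-d^\infty_{ij}\big)\frac{\mathbf{x}_j-\mathbf{x}_i}{\|\mathbf{x}_j-\mathbf{x}_i\|}.$$ Then for all $i,j\in[N]$, $$\sup_{t\ge0}\Big|\frac{d}{dt}\|\mathbf{v}_i(t)-\mathbf{v}_j(t)\|^2\Big|<\infty.$$ In particular, $t\mapsto\|\mathbf{v}_i(t)-\mathbf{v}_j(t)\|^2$ is uniformly continuous on $[0,\infty)$.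
   Context: $N\ge2$, $d\ge1$, Euclidean norm and inner product on $\mathbb{R}^d$; $\kappa_0,\kappa_1,\kappa_2\ge0$; $[d^\infty_{ij}]$ real symmetric with zero diagonal. $E:=\frac12\sum_i\|\mathbf{v}_i\|^2+\frac{\kappa_2}{4N}\sum_{i,j}(\|\mathbf{x}_j-\mathbf{x}_i\|-d^\infty_{ij})^2$, $U:=\max_{i\ne j}d^\infty_{ij}+\sqrt{2NE(0)/\kappa_2}$. The weight $\psi:[0,\infty)\to[0,\infty)$ is locally Lipschitz with $0\le\psi(r)\le\psi_M$ for all $r\ge0$ and $\min_{r\in[0,U]}\psi(r)>0$. A global smooth solution is a $C^1$ solution on $[0,\infty)$ with $\mathbf{x}_i(t)\ne\mathbf{x}_j(t)$ for $i\ne j$. *)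

theory Defs
  imports "HOL-Analysis.Analysis"
begin

definition cs_accel ::
  "nat \<Rightarrow> real \<Rightarrow> real \<Rightarrow> real \<Rightarrow> (real \<Rightarrow> real) \<Rightarrow> (nat \<Rightarrow> nat \<Rightarrow> real)
   \<Rightarrow> (nat \<Rightarrow> 'a::euclidean_space) \<Rightarrow> (nat \<Rightarrow> 'a) \<Rightarrow> nat \<Rightarrow> 'a" where
  "cs_accel N k0 k1 k2 \<psi> dinf X V i =
     (k0 / real N) *\<^sub>R (\<Sum>j<N. \<psi> (norm (X j - X i)) *\<^sub>R (V j - V i))
   + (k1 / real N) *\<^sub>R (\<Sum>j\<in>{..<N} - {i}.
        (inner (V j - V i) ((1 / norm (X j - X i)) *\<^sub>R (X j - X i)))
          *\<^sub>R ((1 / norm (X j - X i)) *\<^sub>R (X j - X i)))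
   + (k2 / real N) *\<^sub>R (\<Sum>j\<in>{..<N} - {i}.
        (norm (X j - X i) - dinf i j) *\<^sub>R ((1 / norm (X j - X i)) *\<^sub>R (X j - X i)))"

definition cs_energy ::
  "nat \<Rightarrow> real \<Rightarrow> (nat \<Rightarrow> nat \<Rightarrow> real) \<Rightarrow> (nat \<Rightarrow> 'a::euclidean_space) \<Rightarrow> (nat \<Rightarrow> 'a) \<Rightarrow> real" where
  "cs_energy N k2 dinf X V =
     (1/2) * (\<Sum>i<N. (norm (V i))\<^sup>2)
   + (k2 / (4 * real N)) * (\<Sum>i<N. \<Sum>j<N. (norm (X j - X i) - dinf i j)\<^sup>2)"

definition cs_U :: "nat \<Rightarrow> real \<Rightarrow> (nat \<Rightarrow> nat \<Rightarrow> real) \<Rightarrow> real \<Rightarrow> real" where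
  "cs_U N k2 dinf E0 =
     Max {dinf i j | i j. i < N \<and> j < N \<and> i \<noteq> j} + sqrt (2 * real N * E0 / k2)"

end

theory Submission
  imports Defs
begin

lemma vd_inner:
  assumes "(f has_vector_derivative f') (at t within S)" "(g has_vector_derivative g') (at t within S)"
  shows "((\<lambda>s. inner (f s) (g s)) has_real_derivative (inner f' (g t) + inner (f t) g')) (at t within S)"
  using has_derivative_inner[OF assms[unfolded has_vector_derivative_def]]
  unfolding has_field_derivative_def
  by (rule has_derivative_eq_rhs) (auto simp: algebra_simps fun_eq_iff)

lemma vd_norm:
  assumes "(f has_vector_derivative f') (at t within S)" "f t \<noteq> 0"
  shows "((\<lambda>s. norm (f s)) has_real_derivative (inner (f t) f' / norm (f t))) (at t within S)"
proof -
  have "((\<lambda>s. norm (f s)) has_derivative (\<lambda>h. inner (h *\<^sub>R f') (sgn (f t)))) (at t within S)"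
    using has_derivative_compose[OF assms(1)[unfolded has_vector_derivative_def] has_derivative_norm[OF assms(2)]] .
  then show ?thesis unfolding has_field_derivative_def
    by (rule has_derivative_eq_rhs) (auto simp: sgn_div_norm fun_eq_iff field_simps inner_commute)
qed

lemma norm_e_le: "norm ((1 / norm w) *\<^sub>R (w::'a::real_normed_vector)) \<le> 1"
  by (cases "w = 0") auto

lemma sum_minus_i:
  fixes N :: nat
  assumes "h i = 0" "i < N"
  shows "(\<Sum>j\<in>{..<N} - {i}. h j) = (\<Sum>j<N. h j)"
  using assms sum.remove[of "{..<N}" i h] by simp

lemma pair_nonpos:
  fixes X V :: "nat \<Rightarrow> 'a::euclidean_space" and k2 :: real
  assumes k0: "k0 \<ge> 0" and k1: "k1 \<ge> 0" and Npos: "(N::real) > 0"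
    and ps: "\<psi> (norm (X j - X i)) \<ge> 0" and ds: "dinf i j = dinf j i"
  defines "e \<equiv> \<lambda>i j. (1 / norm (X j - X i)) *\<^sub>R (X j - X i)"
  defines "F \<equiv> \<lambda>i j. k0/N * (\<psi> (norm (X j - X i)) * inner (V i) (V j - V i))
     + k1/N * (inner (V j - V i) (e i j) * inner (V i) (e i j))
     + k2/N * ((norm (X j - X i) - dinf i j) * inner (V i) (e i j))
     + k2/(4*N) * (2*(norm (X j - X i) - dinf i j) * (inner (X j - X i) (V j - V i) / norm (X j - X i)))"
  shows "F i j + F j i \<le> 0"
proof -
  have eji: "e j i = - e i j" unfolding e_def by (simp add: norm_minus_commute scaleR_right_diff_distrib)
  have nji: "norm (X i - X j) = norm (X j - X i)" by (simp add: norm_minus_commute)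
  have key: "inner (X j - X i) (V j - V i) / norm (X j - X i) = inner (V j - V i) (e i j)"
    unfolding e_def by (simp add: inner_commute)
  have key2: "inner (X i - X j) (V i - V j) / norm (X j - X i) = inner (V j - V i) (e i j)"
    using key by (metis inner_minus_left inner_minus_right minus_diff_eq minus_minus)
  define r where "r = norm (X j - X i)"
  define a where "a = inner (V i) (e i j)"
  define b where "b = inner (V j) (e i j)"
  have "F i j + F j i = - (k0/N) * (\<psi> r * inner (V j - V i) (V j - V i)) - (k1/N) * (b - a)^2"
    unfolding F_def eji nji key key2
    apply (simp add: inner_diff_left inner_diff_right ds inner_commute a_def[symmetric] b_def[symmetric] r_def[symmetric] 
      inner_minus_right inner_minus_left)
    using Npos apply (simp add: field_simps power2_eq_square)
    done
  also have "\<dots> \<le> 0"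
  proof -
    have "0 \<le> k0/N * (\<psi> r * inner (V j - V i) (V j - V i))"
      using k0 k1 Npos ps unfolding r_def by (auto intro!: mult_nonneg_nonneg)
    moreover have "0 \<le> k1/N * (b - a)^2" using k1 Npos by auto
    ultimately show ?thesis by linarith
  qed
  finally show ?thesis .
qed

lemma dissip:
  fixes X V :: "nat \<Rightarrow> 'a::euclidean_space" and k2 :: real and N :: nat
  assumes k0: "k0 \<ge> 0" and k1: "k1 \<ge> 0" and Npos: "N > 0"
    and psi: "\<And>r. r \<ge> 0 \<Longrightarrow> \<psi> r \<ge> 0"
    and ds: "\<And>i j. i<N \<Longrightarrow> j<N \<Longrightarrow> dinf i j = dinf j i"
  shows "(\<Sum>i<N. inner (V i) (cs_accel N k0 k1 k2 \<psi> dinf X V i))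
    + k2/(4*real N) * (\<Sum>i<N. \<Sum>j<N. 2*(norm (X j - X i) - dinf i j) * (inner (X j - X i) (V j - V i) / norm (X j - X i))) \<le> 0"
proof -
  define e where "e \<equiv> \<lambda>i j. (1 / norm (X j - X i)) *\<^sub>R (X j - X i)"
  define F where "F \<equiv> \<lambda>i j. k0/real N * (\<psi> (norm (X j - X i)) * inner (V i) (V j - V i))
     + k1/real N * (inner (V j - V i) (e i j) * inner (V i) (e i j))
     + k2/real N * ((norm (X j - X i) - dinf i j) * inner (V i) (e i j))
     + k2/(4*real N) * (2*(norm (X j - X i) - dinf i j) * (inner (X j - X i) (V j - V i) / norm (X j - X i)))"
  have per: "inner (V i) (cs_accel N k0 k1 k2 \<psi> dinf X V i) + k2/(4*real N) * (\<Sum>j<N. 2*(norm (X j - X i) - dinf i j) * (inner (X j - X i) (V j - V i) / norm (X j - X i)))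
     = (\<Sum>j<N. F i j)" if i: "i < N" for i
  proof -
    have s1: "(\<Sum>j\<in>{..<N}-{i}. inner (V j - V i) (e i j) * inner (V i) (e i j)) = (\<Sum>j<N. inner (V j - V i) (e i j) * inner (V i) (e i j))"
      by (rule sum_minus_i) (simp_all add: e_def i)
    have s2: "(\<Sum>j\<in>{..<N}-{i}. (norm (X j - X i) - dinf i j) * inner (V i) (e i j)) = (\<Sum>j<N. (norm (X j - X i) - dinf i j) * inner (V i) (e i j))"
      by (rule sum_minus_i) (simp_all add: e_def i)
    have ca: "cs_accel N k0 k1 k2 \<psi> dinf X V i = (k0 / real N) *\<^sub>R (\<Sum>j<N. \<psi> (norm (X j - X i)) *\<^sub>R (V j - V i))
      + (k1 / real N) *\<^sub>R (\<Sum>j\<in>{..<N}-{i}. inner (V j - V i) (e i j) *\<^sub>R e i j)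
      + (k2 / real N) *\<^sub>R (\<Sum>j\<in>{..<N}-{i}. (norm (X j - X i) - dinf i j) *\<^sub>R e i j)"
      unfolding cs_accel_def e_def by simp
    have "inner (V i) (cs_accel N k0 k1 k2 \<psi> dinf X V i) = (k0 / real N) * (\<Sum>j<N. \<psi> (norm (X j - X i)) * inner (V i) (V j - V i))
      + (k1 / real N) * (\<Sum>j<N. inner (V j - V i) (e i j) * inner (V i) (e i j))
      + (k2 / real N) * (\<Sum>j<N. (norm (X j - X i) - dinf i j) * inner (V i) (e i j))"
      unfolding ca s1[symmetric] s2[symmetric] inner_add_right inner_scaleR_right inner_sum_right ..
    then show ?thesis
      unfolding F_def
      by (simp add: sum.distrib sum_distrib_left)
  qed
  have "(\<Sum>i<N. inner (V i) (cs_accel N k0 k1 k2 \<psi> dinf X V i))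
    + k2/(4*real N) * (\<Sum>i<N. \<Sum>j<N. 2*(norm (X j - X i) - dinf i j) * (inner (X j - X i) (V j - V i) / norm (X j - X i)))
    = (\<Sum>i<N. inner (V i) (cs_accel N k0 k1 k2 \<psi> dinf X V i) + k2/(4*real N) * (\<Sum>j<N. 2*(norm (X j - X i) - dinf i j) * (inner (X j - X i) (V j - V i) / norm (X j - X i))))"
    by (simp only: sum.distrib sum_distrib_left)
  also have "\<dots> = (\<Sum>i<N. \<Sum>j<N. F i j)"
    by (rule sum.cong[OF refl], rule per) simp
  moreover have "(\<Sum>i<N. \<Sum>j<N. F i j) = (\<Sum>i<N. \<Sum>j<N. F j i)"
    by (rule sum.swap)
  moreover have "(\<Sum>i<N. \<Sum>j<N. F i j) + (\<Sum>i<N. \<Sum>j<N. F j i) \<le> 0"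
  proof -
    have "(\<Sum>i<N. \<Sum>j<N. F i j) + (\<Sum>i<N. \<Sum>j<N. F j i) = (\<Sum>i<N. \<Sum>j<N. F i j + F j i)"
      by (simp add: sum.distrib)
    also have "\<dots> \<le> 0"
      unfolding F_def e_def
      by (intro sum_nonpos pair_nonpos k0 k1 psi ds) (use Npos in auto)
    finally show ?thesis .
  qed
  ultimately show ?thesis by linarith
qed

lemma energy_deriv:
  fixes x v :: "nat \<Rightarrow> real \<Rightarrow> 'a::euclidean_space" and N::nat and a :: "nat \<Rightarrow> 'a"
  assumes ddiag: "\<And>i. i<N \<Longrightarrow> dinf i i = 0"
    and xd: "\<And>i. i<N \<Longrightarrow> (x i has_vector_derivative v i t) (at t within S)"
    and vd: "\<And>i. i<N \<Longrightarrow> (v i has_vector_derivative a i) (at t within S)"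
    and dist: "\<And>i j. i<N \<Longrightarrow> j<N \<Longrightarrow> i\<noteq>j \<Longrightarrow> x i t \<noteq> x j t"
  shows "((\<lambda>s. cs_energy N k2 dinf (\<lambda>i. x i s) (\<lambda>i. v i s)) has_real_derivative
     (\<Sum>i<N. inner (v i t) (a i)) + k2/(4*real N) * (\<Sum>i<N. \<Sum>j<N. 2*(norm (x j t - x i t) - dinf i j) * (inner (x j t - x i t) (v j t - v i t) / norm (x j t - x i t)))) (at t within S)"
proof -
  have kin: "((\<lambda>s. (norm (v i s))\<^sup>2) has_real_derivative 2 * inner (v i t) (a i)) (at t within S)" if i: "i<N" for i
  proof -
    have "((\<lambda>s. inner (v i s) (v i s)) has_real_derivative (inner (a i) (v i t) + inner (v i t) (a i))) (at t within S)"
      by (rule vd_inner[OF vd[OF i] vd[OF i]])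
    then show ?thesis by (simp add: power2_norm_eq_inner inner_commute)
  qed
  have pot: "((\<lambda>s. (norm (x j s - x i s) - dinf i j)\<^sup>2) has_real_derivative
      2*(norm (x j t - x i t) - dinf i j) * (inner (x j t - x i t) (v j t - v i t) / norm (x j t - x i t))) (at t within S)"
    if i: "i<N" and j: "j<N" for i j
  proof (cases "i = j")
    case True
    then show ?thesis using ddiag[OF i] by simp
  next
    case False
    have n: "((\<lambda>s. norm (x j s - x i s)) has_real_derivative (inner (x j t - x i t) (v j t - v i t) / norm (x j t - x i t))) (at t within S)"
      by (rule vd_norm[OF has_vector_derivative_diff[OF xd[OF j] xd[OF i]]]) (use dist[OF i j False] in auto)
    have "((\<lambda>s. (norm (x j s - x i s) - dinf i j)^2) has_real_derivative
      of_nat 2 * ((inner (x j t - x i t) (v j t - v i t) / norm (x j t - x i t) - 0) * (norm (x j t - x i t) - dinf i j) ^ (2 - Suc 0))) (at t within S)"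
      by (rule DERIV_power[OF DERIV_diff[OF n DERIV_const]])
    then show ?thesis by (rule DERIV_cong) simp
  qed
  show ?thesis
    unfolding cs_energy_def
    apply (rule DERIV_cong)
     apply (rule DERIV_add[OF DERIV_cmult[OF DERIV_sum[OF kin]] DERIV_cmult[OF DERIV_sum[OF DERIV_sum[OF pot]]]])
       apply simp_all
    apply (simp add: sum_distrib_left mult.commute)
    done
qed

lemma norm_sum_le_card:
  fixes f :: "nat \<Rightarrow> 'a::real_normed_vector"
  assumes "finite A" "card A \<le> N" "\<And>j. j \<in> A \<Longrightarrow> norm (f j) \<le> K" "K \<ge> 0"
  shows "norm (sum f A) \<le> real N * K"
proof -
  have "norm (sum f A) \<le> (\<Sum>j\<in>A. norm (f j))" by (rule norm_sum)
  also have "\<dots> \<le> of_nat (card A) * K" by (rule sum_bounded_above) (use assms in auto)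
  also have "\<dots> \<le> real N * K" using assms by (intro mult_right_mono) auto
  finally show ?thesis .
qed

lemma accel_bound:
  fixes X V :: "nat \<Rightarrow> 'a::euclidean_space" and N :: nat
  assumes Npos: "N>0" and k0: "k0 \<ge> 0" and k1: "k1 \<ge> 0" and k2: "k2 \<ge> 0" and i: "i<N"
   and vb: "\<And>j. j<N \<Longrightarrow> norm (V j) \<le> B"
   and pb: "\<And>j. j<N \<Longrightarrow> k2 * \<bar>norm (X j - X i) - dinf i j\<bar> \<le> P"
   and psi: "\<And>r. r\<ge>0 \<Longrightarrow> 0 \<le> \<psi> r \<and> \<psi> r \<le> \<psi>M"
  shows "norm (cs_accel N k0 k1 k2 \<psi> dinf X V i) \<le> k0*\<psi>M*(2*B) + k1*(2*B) + P"
proof -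
  define e where "e \<equiv> \<lambda>j. (1 / norm (X j - X i)) *\<^sub>R (X j - X i)"
  have ne: "norm (e j) \<le> 1" for j unfolding e_def by (rule norm_e_le)
  have B0: "B \<ge> 0" using vb[OF i] norm_ge_zero order_trans by blast
  have P0: "P \<ge> 0"
  proof -
    have "0 \<le> k2 * \<bar>norm (X i - X i) - dinf i i\<bar>" using k2 by simp
    then show ?thesis using pb[OF i] by linarith
  qed
  have psiM: "\<psi>M \<ge> 0" using psi[of 0] by auto
  have dv: "norm (V j - V i) \<le> 2*B" if "j<N" for j
    using norm_triangle_ineq4[of "V j" "V i"] vb[OF that] vb[OF i] by linarith
  have cardD: "card ({..<N} - {i}) \<le> N" by (metis card_Diff1_le card_lessThan)
  have T1: "norm ((k0 / real N) *\<^sub>R (\<Sum>j<N. \<psi> (norm (X j - X i)) *\<^sub>R (V j - V i))) \<le> k0*\<psi>M*(2*B)"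
  proof -
    have "norm (\<Sum>j<N. \<psi> (norm (X j - X i)) *\<^sub>R (V j - V i)) \<le> real N * (\<psi>M*(2*B))"
    proof (rule norm_sum_le_card)
      fix j assume j: "j \<in> {..<N}"
      have "norm (\<psi> (norm (X j - X i)) *\<^sub>R (V j - V i)) = \<bar>\<psi> (norm (X j - X i))\<bar> * norm (V j - V i)" by simp
      also have "\<dots> \<le> \<psi>M * (2*B)" using psi[of "norm (X j - X i)"] dv[of j] j
        by (intro mult_mono) auto
      finally show "norm (\<psi> (norm (X j - X i)) *\<^sub>R (V j - V i)) \<le> \<psi>M * (2*B)" .
    qed (use psiM B0 in auto)
    note nb = this
    have "(k0 / real N) * norm (\<Sum>j<N. \<psi> (norm (X j - X i)) *\<^sub>R (V j - V i)) \<le> (k0 / real N) * (real N * (\<psi>M*(2*B)))"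
      by (rule mult_left_mono[OF nb]) (use k0 in auto)
    also have "\<dots> = k0 * (\<psi>M*(2*B))" using Npos by simp
    finally show ?thesis using k0 by (simp add: mult.assoc)
  qed
  have T2: "norm ((k1 / real N) *\<^sub>R (\<Sum>j\<in>{..<N}-{i}. inner (V j - V i) (e j) *\<^sub>R e j)) \<le> k1*(2*B)"
  proof -
    have "norm (\<Sum>j\<in>{..<N}-{i}. inner (V j - V i) (e j) *\<^sub>R e j) \<le> real N * (2*B)"
    proof (rule norm_sum_le_card)
      fix j assume j: "j \<in> {..<N}-{i}"
      have "norm (inner (V j - V i) (e j) *\<^sub>R e j) = \<bar>inner (V j - V i) (e j)\<bar> * norm (e j)" by simp
      also have "\<dots> \<le> (norm (V j - V i) * norm (e j)) * 1"
        by (intro mult_mono Cauchy_Schwarz_ineq2 ne) auto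
      also have "\<dots> \<le> (2*B) * 1 * 1" using dv[of j] j ne[of j] B0
        by (intro mult_mono) auto
      finally show "norm (inner (V j - V i) (e j) *\<^sub>R e j) \<le> 2*B" by simp
    qed (use cardD B0 in auto)
    note nb = this
    have "(k1 / real N) * norm (\<Sum>j\<in>{..<N}-{i}. inner (V j - V i) (e j) *\<^sub>R e j) \<le> (k1 / real N) * (real N * ((2*B)))"
      by (rule mult_left_mono[OF nb]) (use k1 in auto)
    also have "\<dots> = k1 * ((2*B))" using Npos by simp
    finally show ?thesis using k1 by (simp add: mult.assoc)
  qed
  have T3: "norm ((k2 / real N) *\<^sub>R (\<Sum>j\<in>{..<N}-{i}. (norm (X j - X i) - dinf i j) *\<^sub>R e j)) \<le> P"
  proof -
    have "norm (\<Sum>j\<in>{..<N}-{i}. k2 *\<^sub>R ((norm (X j - X i) - dinf i j) *\<^sub>R e j)) \<le> real N * P"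
    proof (rule norm_sum_le_card)
      fix j assume j: "j \<in> {..<N}-{i}"
      have "norm (k2 *\<^sub>R ((norm (X j - X i) - dinf i j) *\<^sub>R e j)) = (k2 * \<bar>norm (X j - X i) - dinf i j\<bar>) * norm (e j)"
        using k2 by (simp add: abs_mult)
      also have "\<dots> \<le> P * 1" using pb[of j] j ne[of j] P0
        by (intro mult_mono) auto
      finally show "norm (k2 *\<^sub>R ((norm (X j - X i) - dinf i j) *\<^sub>R e j)) \<le> P" by simp
    qed (use cardD P0 in auto)
    then have "norm (k2 *\<^sub>R (\<Sum>j\<in>{..<N}-{i}. (norm (X j - X i) - dinf i j) *\<^sub>R e j)) \<le> real N * P"
      by (simp add: scaleR_sum_right)
    then have "k2 * norm (\<Sum>j\<in>{..<N}-{i}. (norm (X j - X i) - dinf i j) *\<^sub>R e j) \<le> real N * P"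
      using k2 by simp
    then have "(1 / real N) * (k2 * norm (\<Sum>j\<in>{..<N}-{i}. (norm (X j - X i) - dinf i j) *\<^sub>R e j)) \<le> (1 / real N) * (real N * P)"
      by (rule mult_left_mono) auto
    then show ?thesis using k2 Npos by simp
  qed
  have "cs_accel N k0 k1 k2 \<psi> dinf X V i = (k0 / real N) *\<^sub>R (\<Sum>j<N. \<psi> (norm (X j - X i)) *\<^sub>R (V j - V i))
      + (k1 / real N) *\<^sub>R (\<Sum>j\<in>{..<N}-{i}. inner (V j - V i) (e j) *\<^sub>R e j)
      + (k2 / real N) *\<^sub>R (\<Sum>j\<in>{..<N}-{i}. (norm (X j - X i) - dinf i j) *\<^sub>R e j)"
    unfolding cs_accel_def e_def by simp
  then show ?thesis using T1 T2 T3 norm_triangle_ineq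
    by (smt (verit) norm_triangle_ineq)
qed

theorem lemma4p1:
  fixes N :: nat and k0 k1 k2 \<psi>M :: real and \<psi> :: "real \<Rightarrow> real"
    and dinf :: "nat \<Rightarrow> nat \<Rightarrow> real"
    and x v :: "nat \<Rightarrow> real \<Rightarrow> 'a::euclidean_space"
  assumes N2: "N \<ge> 2"
    and k0: "k0 \<ge> 0" and k1: "k1 \<ge> 0" and k2: "k2 \<ge> 0"
    and dsym: "\<And>i j. i < N \<Longrightarrow> j < N \<Longrightarrow> dinf i j = dinf j i"
    and ddiag: "\<And>i. i < N \<Longrightarrow> dinf i i = 0"
    and psi_lip: "\<And>R. R \<ge> 0 \<Longrightarrow> \<exists>L. L-lipschitz_on {0..R} \<psi>"
    and psi_bdd: "\<And>r. r \<ge> 0 \<Longrightarrow> 0 \<le> \<psi> r \<and> \<psi> r \<le> \<psi>M"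
    and psi_pos: "\<exists>m>0. \<forall>r\<in>{0..cs_U N k2 dinf (cs_energy N k2 dinf (\<lambda>i. x i 0) (\<lambda>i. v i 0))}.
                     m \<le> \<psi> r"
    and xder: "\<And>i t. i < N \<Longrightarrow> t \<ge> 0 \<Longrightarrow> (x i has_vector_derivative v i t) (at t within {0..})"
    and vder: "\<And>i t. i < N \<Longrightarrow> t \<ge> 0 \<Longrightarrow>
       (v i has_vector_derivative cs_accel N k0 k1 k2 \<psi> dinf (\<lambda>j. x j t) (\<lambda>j. v j t) i)
         (at t within {0..})"
    and distinct: "\<And>i j t. i < N \<Longrightarrow> j < N \<Longrightarrow> i \<noteq> j \<Longrightarrow> t \<ge> 0 \<Longrightarrow> x i t \<noteq> x j t"
    and i: "i < N" and j: "j < N"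
  shows "(\<exists>C. \<forall>t\<ge>0. \<exists>D. ((\<lambda>s. (norm (v i s - v j s))\<^sup>2) has_real_derivative D) (at t within {0..})
                          \<and> \<bar>D\<bar> \<le> C)
       \<and> uniformly_continuous_on {0..} (\<lambda>s. (norm (v i s - v j s))\<^sup>2)"
proof -
  define a where "a i t = cs_accel N k0 k1 k2 \<psi> dinf (\<lambda>j. x j t) (\<lambda>j. v j t) i" for i t
  define E where "E t = cs_energy N k2 dinf (\<lambda>i. x i t) (\<lambda>i. v i t)" for t
  define E0 where "E0 = E 0"
  have Npos: "N > 0" using N2 by simp
  have psi0: "\<And>r. r \<ge> 0 \<Longrightarrow> \<psi> r \<ge> 0" using psi_bdd by blast
  have psiM: "\<psi>M \<ge> 0" using psi_bdd[of 0] by simp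
  have Ed: "\<exists>D. (E has_real_derivative D) (at t within {0..}) \<and> D \<le> 0" if t: "t \<ge> 0" for t
  proof -
    have "(E has_real_derivative (\<Sum>i<N. inner (v i t) (a i t)) + k2/(4*real N) * (\<Sum>i<N. \<Sum>j<N. 2*(norm (x j t - x i t) - dinf i j) * (inner (x j t - x i t) (v j t - v i t) / norm (x j t - x i t)))) (at t within {0..})"
      unfolding E_def
      by (rule energy_deriv[where a="\<lambda>i. a i t"]) (auto simp: ddiag xder vder a_def t distinct)
    moreover have "(\<Sum>i<N. inner (v i t) (a i t)) + k2/(4*real N) * (\<Sum>i<N. \<Sum>j<N. 2*(norm (x j t - x i t) - dinf i j) * (inner (x j t - x i t) (v j t - v i t) / norm (x j t - x i t))) \<le> 0"
      unfolding a_def by (rule dissip[OF k0 k1 Npos psi0 dsym])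
    ultimately show ?thesis by blast
  qed
  have Econt: "continuous (at t within {0..}) E" if "t \<ge> 0" for t
    using Ed[OF that] DERIV_continuous by blast
  have Edec: "E t \<le> E0" if t: "t \<ge> 0" for t
  proof (cases "t = 0")
    case True then show ?thesis by (simp add: E0_def)
  next
    case False
    have cont: "continuous_on {0..t} E"
      unfolding continuous_on_eq_continuous_within
      using Econt continuous_within_subset[of _ "{0..}" E "{0..t}"] by auto
    show ?thesis unfolding E0_def
    proof (rule DERIV_nonpos_imp_decreasing_open[of 0 t E])
      fix s :: real assume s: "0 < s" "s < t"
      then obtain D where D: "(E has_real_derivative D) (at s within {0..})" "D \<le> 0" using Ed[of s] s by auto
      have "(E has_real_derivative D) (at s within {0<..})"
        by (rule DERIV_subset[OF D(1)]) auto
      then have "(E has_real_derivative D) (at s)"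
        using at_within_open[of s "{0<..}"] s by simp
      then show "\<exists>y. (E has_real_derivative y) (at s) \<and> y \<le> 0" using D(2) by blast
    qed (use t cont in auto)
  qed
  define B where "B = sqrt (2 * E0)"
  define P where "P = sqrt (4 * real N * k2 * E0)"
  have Esplit: "E t = (1/2) * (\<Sum>i<N. (norm (v i t))\<^sup>2) + (k2 / (4 * real N)) * (\<Sum>i<N. \<Sum>j<N. (norm (x j t - x i t) - dinf i j)\<^sup>2)" for t
    unfolding E_def cs_energy_def by simp
  have potnn: "0 \<le> (k2 / (4 * real N)) * (\<Sum>i<N. \<Sum>j<N. (norm (x j t - x i t) - dinf i j)\<^sup>2)" for t
    using k2 by (intro mult_nonneg_nonneg sum_nonneg) auto
  have kinnn: "0 \<le> (1/2) * (\<Sum>i<N. (norm (v i t))\<^sup>2)" for t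
    by (intro mult_nonneg_nonneg sum_nonneg) auto
  have vb: "norm (v i t) \<le> B" if "i < N" "t \<ge> 0" for i t
  proof -
    have "(norm (v i t))\<^sup>2 \<le> (\<Sum>i<N. (norm (v i t))\<^sup>2)"
      by (rule member_le_sum) (use that in auto)
    then have "(norm (v i t))\<^sup>2 \<le> 2 * E0" using Esplit[of t] potnn[of t] Edec[OF that(2)] by linarith
    then show ?thesis unfolding B_def by (rule real_le_rsqrt)
  qed
  have pb: "k2 * \<bar>norm (x j t - x i t) - dinf i j\<bar> \<le> P" if "i < N" "j < N" "t \<ge> 0" for i j t
  proof -
    have "(norm (x j t - x i t) - dinf i j)\<^sup>2 \<le> (\<Sum>j<N. (norm (x j t - x i t) - dinf i j)\<^sup>2)"
      by (rule member_le_sum) (use that in auto)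
    also have "\<dots> \<le> (\<Sum>i<N. \<Sum>j<N. (norm (x j t - x i t) - dinf i j)\<^sup>2)"
      by (rule member_le_sum[where f="\<lambda>i. \<Sum>j<N. (norm (x j t - x i t) - dinf i j)\<^sup>2"]) (use that in \<open>auto intro: sum_nonneg\<close>)
    finally have h: "(norm (x j t - x i t) - dinf i j)\<^sup>2 \<le> (\<Sum>i<N. \<Sum>j<N. (norm (x j t - x i t) - dinf i j)\<^sup>2)" .
    have "(k2 / (4 * real N)) * (\<Sum>i<N. \<Sum>j<N. (norm (x j t - x i t) - dinf i j)\<^sup>2) \<le> E0"
      using Esplit[of t] kinnn[of t] Edec[OF that(3)] by linarith
    then have "(k2 / (4 * real N)) * (norm (x j t - x i t) - dinf i j)\<^sup>2 \<le> E0"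
      using h k2 by (smt (verit) divide_nonneg_nonneg mult_left_mono of_nat_0_le_iff)
    then have "k2 * (norm (x j t - x i t) - dinf i j)\<^sup>2 \<le> 4 * real N * E0"
      using Npos by (simp add: field_simps)
    then have "k2 * (k2 * (norm (x j t - x i t) - dinf i j)\<^sup>2) \<le> k2 * (4 * real N * E0)"
      using k2 by (rule mult_left_mono)
    then have "(k2 * \<bar>norm (x j t - x i t) - dinf i j\<bar>)\<^sup>2 \<le> 4 * real N * k2 * E0"
      by (simp add: power_mult_distrib power2_abs algebra_simps power2_eq_square)
    then show ?thesis unfolding P_def by (rule real_le_rsqrt)
  qed
  define A where "A = k0*\<psi>M*(2*B) + k1*(2*B) + P"
  have ab: "norm (a i t) \<le> A" if "i < N" "t \<ge> 0" for i t
    unfolding a_def A_def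
    by (rule accel_bound[OF Npos k0 k1 k2 that(1)]) (use vb pb psi_bdd that in auto)
  define f where "f s = (norm (v i s - v j s))\<^sup>2" for s
  define Df where "Df t = inner (a i t - a j t) (v i t - v j t) + inner (v i t - v j t) (a i t - a j t)" for t
  define C where "C = 2 * (2*B) * (2*A)"
  have fd: "(f has_real_derivative Df t) (at t within {0..})" if "t \<ge> 0" for t
  proof -
    have d: "((\<lambda>s. v i s - v j s) has_vector_derivative (a i t - a j t)) (at t within {0..})"
      using vder[OF i that] vder[OF j that] unfolding a_def by (rule has_vector_derivative_diff)
    have "f = (\<lambda>s. inner (v i s - v j s) (v i s - v j s))"
      unfolding f_def by (simp add: power2_norm_eq_inner)
    then show ?thesis unfolding Df_def using vd_inner[OF d d] by simp
  qed
  have Db: "\<bar>Df t\<bar> \<le> C" if "t \<ge> 0" for t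
  proof -
    have n1: "norm (v i t - v j t) \<le> 2*B"
      using norm_triangle_ineq4[of "v i t" "v j t"] vb[OF i that] vb[OF j that] by linarith
    have n2: "norm (a i t - a j t) \<le> 2*A"
      using norm_triangle_ineq4[of "a i t" "a j t"] ab[OF i that] ab[OF j that] by linarith
    have "\<bar>Df t\<bar> = 2 * \<bar>inner (v i t - v j t) (a i t - a j t)\<bar>" unfolding Df_def by (simp add: inner_commute)
    also have "\<dots> \<le> 2 * (norm (v i t - v j t) * norm (a i t - a j t))"
      using Cauchy_Schwarz_ineq2 by simp
    also have "\<dots> \<le> 2 * ((2*B) * (2*A))"
    proof -
      have "0 \<le> 2*B" using n1 norm_ge_zero[of "v i t - v j t"] by linarith
      moreover have "0 \<le> norm (a i t - a j t)" by simp
      ultimately show ?thesis using n1 n2 by (intro mult_left_mono mult_mono) auto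
    qed
    finally show ?thesis unfolding C_def by simp
  qed
  have part1: "\<exists>C. \<forall>t\<ge>0. \<exists>D. (f has_real_derivative D) (at t within {0..}) \<and> \<bar>D\<bar> \<le> C"
    using fd Db by blast
  have lip: "C-lipschitz_on {0..} f"
  proof (rule lipschitz_onI)
    fix s u :: real assume su: "s \<in> {0..}" "u \<in> {0..}"
    have "norm (f s - f u) \<le> C * norm (s - u)"
    proof (rule differentiable_bound[where f'="\<lambda>t h. Df t * h"])
      show "convex {0::real..}" by (rule convex_real_interval)
      show "(f has_derivative (\<lambda>h. Df t * h)) (at t within {0..})" if "t \<in> {0..}" for t
        using fd[of t] that by (simp add: has_field_derivative_def)
      show "onorm (\<lambda>h. Df t * h) \<le> C" if "t \<in> {0..}" for t
        by (rule onorm_le) (use Db[of t] that in \<open>auto simp: abs_mult intro: mult_right_mono\<close>)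
    qed (use su in auto)
    then show "dist (f s) (f u) \<le> C * dist s u" by (simp add: dist_norm)
  next
    show "0 \<le> C" using Db[of 0] by simp
  qed
  show ?thesis
    using part1 lipschitz_on_uniformly_continuous[OF lip] unfolding f_def by simp
qed

end
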